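(* Let $m\ge 1$ be an odd integer divisible by $3$. Then for every $n\in\mathbb{N}=\mathbb{Z}_{\ge 0}$, the friendship graph $F_n$ is $\mathbb{Z}_m$-cordial.
   Context: Graphs are finite, simple and undirected. For $n\in\mathbb{N}$, the friendship graph $F_n$ is the union of $n$ copies of the triangle $C_3$ joined at a single common (central) vertex (so $F_0$ is a single vertex). For an abelian group $A$ and a graph $G=(V,E)$, a vertex labeling $\ell:V\to A$ induces an edge labeling $\ell(\{v_1,v_2\})=\ell(v_1)+\ell(v_2)$. Let $f_V(a)=|\{v\in V:\ell(v)=a\}|$ and $f_E(a)=|\{e\in E:\ell(e)=a\}|$. The labeling is $A$-cordial if $|f_V(a_1)-f_V(a_2)|\le 1$ and $|f_E(a_1)-f_E(a_2)|\le 1$ for all $a_1,a_2\in A$; $G$ is $A$-cordial if it admits an $A$-cordial labeling. *)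

theory Defs
  imports "HOL-Algebra.Elementary_Groups"
begin

text \<open>A vertex labeling l : V -> carrier A induces the edge labeling
  l {v1,v2} = l v1 + l v2 (the group operation of A, written multiplicatively
  in HOL-Algebra).\<close>

definition vertex_count :: "('b, 'c) monoid_scheme \<Rightarrow> 'a set \<Rightarrow> ('a \<Rightarrow> 'b) \<Rightarrow> 'b \<Rightarrow> nat" where
  "vertex_count A V l a = card {v \<in> V. l v = a}"

definition edge_count :: "('b, 'c) monoid_scheme \<Rightarrow> 'a set set \<Rightarrow> ('a \<Rightarrow> 'b) \<Rightarrow> 'b \<Rightarrow> nat" where
  "edge_count A E l a = card {e \<in> E. \<exists>x y. e = {x, y} \<and> x \<noteq> y \<and> l x \<otimes>\<^bsub>A\<^esub> l y = a}"

definition cordial_labeling :: "('b, 'c) monoid_scheme \<Rightarrow> 'a set \<Rightarrow> 'a set set \<Rightarrow> ('a \<Rightarrow> 'b) \<Rightarrow> bool" where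
  "cordial_labeling A V E l \<longleftrightarrow>
     (\<forall>v\<in>V. l v \<in> carrier A) \<and>
     (\<forall>a1\<in>carrier A. \<forall>a2\<in>carrier A.
        \<bar>int (vertex_count A V l a1) - int (vertex_count A V l a2)\<bar> \<le> 1 \<and>
        \<bar>int (edge_count A E l a1) - int (edge_count A E l a2)\<bar> \<le> 1)"

definition is_cordial :: "('b, 'c) monoid_scheme \<Rightarrow> 'a set \<Rightarrow> 'a set set \<Rightarrow> bool" where
  "is_cordial A V E \<longleftrightarrow> (\<exists>l. cordial_labeling A V E l)"

definition friendship_vertices :: "nat \<Rightarrow> nat set" where
  "friendship_vertices n = {0..2*n}"

definition friendship_edges :: "nat \<Rightarrow> nat set set" where
  "friendship_edges n = (\<Union>i<n. {{0, 2*i+1}, {0, 2*i+2}, {2*i+1, 2*i+2}})"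

end

theory Submission
  imports Defs
begin

definition lab :: "(nat \<Rightarrow> int) \<Rightarrow> (nat \<Rightarrow> int) \<Rightarrow> nat \<Rightarrow> int" where
  "lab al be v = (if v = 0 then 0 else if odd v then al (v div 2) else be (v div 2 - 1))"

lemma lab0[simp]: "lab al be 0 = 0" by (simp add: lab_def)
lemma lab1[simp]: "lab al be (2*i+1) = al i" by (simp add: lab_def)
lemma lab1'[simp]: "lab al be (Suc (2*i)) = al i" using lab1[of al be i] by simp
lemma lab2[simp]: "lab al be (2*i+2) = be i"
proof -
  have "(2*i+2) div 2 - 1 = i" by simp
  moreover have "\<not> odd (2*i+2)" by simp
  ultimately show ?thesis by (simp add: lab_def)
qed

lemma lab2'[simp]: "lab al be (Suc (Suc (2*i))) = be i" using lab2[of al be i] by simp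

lemma card_filter2: "x \<noteq> y \<Longrightarrow> card {v \<in> {x,y}. P v} = (if P x then 1 else 0) + (if P y then 1 else 0)"
proof -
  assume d: "x \<noteq> y"
  have "{v \<in> {x,y}. P v} = (if P x then {x} else {}) \<union> (if P y then {y} else {})" by auto
  moreover have "card ((if P x then {x} else {}) \<union> (if P y then {y} else {})) = card (if P x then {x} else {}) + card (if P y then {y} else {})"
    by (rule card_Un_disjoint) (use d in auto)
  ultimately show ?thesis by simp
qed

lemma card_filter3: "x \<noteq> y \<Longrightarrow> x \<noteq> z \<Longrightarrow> y \<noteq> z \<Longrightarrow>
   card {v \<in> {x,y,z}. P v} = (if P x then 1 else 0) + (if P y then 1 else 0) + (if P z then 1 else 0)"
proof -
  assume d: "x \<noteq> y" "x \<noteq> z" "y \<noteq> z"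
  have "{v \<in> {x,y,z}. P v} = {v \<in> {x}. P v} \<union> {v \<in> {y,z}. P v}" by auto
  moreover have "card ({v \<in> {x}. P v} \<union> {v \<in> {y,z}. P v}) = card {v \<in> {x}. P v} + card {v \<in> {y,z}. P v}"
    by (rule card_Un_disjoint) (use d in auto)
  moreover have "card {v \<in> {x}. P v} = (if P x then 1 else 0)" by (auto simp: Collect_conv_if)
  ultimately show ?thesis using card_filter2[OF d(3), of P] by simp
qed

lemma fv_Suc: "friendship_vertices (Suc n) = friendship_vertices n \<union> {2*n+1, 2*n+2}"
  unfolding friendship_vertices_def by auto

lemma vertex_count_formula:
  "vertex_count A (friendship_vertices n) (lab al be) a =
     (if a = 0 then 1 else 0) + (\<Sum>i<n. (if al i = a then 1 else 0) + (if be i = a then 1 else 0))"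
proof (induction n)
  case 0
  have "friendship_vertices 0 = {0}" by (simp add: friendship_vertices_def)
  then show ?case by (auto simp: vertex_count_def Collect_conv_if)
next
  case (Suc n)
  have "{v \<in> friendship_vertices (Suc n). lab al be v = a} =
        {v \<in> friendship_vertices n. lab al be v = a} \<union> {v \<in> {2*n+1, 2*n+2}. lab al be v = a}"
    by (auto simp: fv_Suc)
  moreover have "card ({v \<in> friendship_vertices n. lab al be v = a} \<union> {v \<in> {2*n+1, 2*n+2}. lab al be v = a})
     = card {v \<in> friendship_vertices n. lab al be v = a} + card {v \<in> {2*n+1, 2*n+2}. lab al be v = a}"
    by (rule card_Un_disjoint) (auto simp: friendship_vertices_def)
  moreover have "card {v \<in> {2*n+1, 2*n+2}. lab al be v = a} = (if al n = a then 1 else 0) + (if be n = a then 1 else 0)"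
    by (subst card_filter2) auto
  ultimately show ?case using Suc by (simp add: vertex_count_def)
qed

definition tri :: "nat \<Rightarrow> nat set set" where
  "tri i = {{0, 2*i+1}, {0, 2*i+2}, {2*i+1, 2*i+2}}"

lemma fe_Suc: "friendship_edges (Suc n) = friendship_edges n \<union> tri n"
  unfolding friendship_edges_def tri_def by (simp add: lessThan_Suc Un_commute)

lemma fe_sub: "e \<in> friendship_edges n \<Longrightarrow> e \<subseteq> {0..2*n}"
  unfolding friendship_edges_def by auto

lemma edge_pred:
  assumes "u \<noteq> w"
  shows "(\<exists>x y. {u,w} = {x, y} \<and> x \<noteq> y \<and> l x \<otimes>\<^bsub>integer_mod_group m\<^esub> l y = a)
     \<longleftrightarrow> (l u + l w) mod int m = a"
  using assms by (auto simp: doubleton_eq_iff add.commute)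

lemma edge_count_formula:
  assumes "\<And>i. i < n \<Longrightarrow> 0 \<le> al i \<and> al i < int m \<and> 0 \<le> be i \<and> be i < int m"
  shows "edge_count (integer_mod_group m) (friendship_edges n) (lab al be) a =
     (\<Sum>i<n. (if al i = a then 1 else 0) + (if be i = a then 1 else 0) + (if (al i + be i) mod int m = a then 1 else 0))"
  using assms
proof (induction n)
  case 0
  then show ?case by (simp add: edge_count_def friendship_edges_def)
next
  case (Suc n)
  let ?P = "\<lambda>e. \<exists>x y. e = {x, y} \<and> x \<noteq> y \<and> lab al be x \<otimes>\<^bsub>integer_mod_group m\<^esub> lab al be y = a"
  have "{e \<in> friendship_edges (Suc n). ?P e} = {e \<in> friendship_edges n. ?P e} \<union> {e \<in> tri n. ?P e}"
    by (auto simp: fe_Suc)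
  moreover have "card ({e \<in> friendship_edges n. ?P e} \<union> {e \<in> tri n. ?P e})
     = card {e \<in> friendship_edges n. ?P e} + card {e \<in> tri n. ?P e}"
  proof (rule card_Un_disjoint)
    show "finite {e \<in> friendship_edges n. ?P e}" by (simp add: friendship_edges_def)
    show "finite {e \<in> tri n. ?P e}" by (simp add: tri_def)
    show "{e \<in> friendship_edges n. ?P e} \<inter> {e \<in> tri n. ?P e} = {}"
    proof (rule ccontr)
      assume "\<not> ?thesis"
      then obtain e where e: "e \<in> friendship_edges n" "e \<in> tri n" by auto
      from fe_sub[OF e(1)] e(2) show False by (auto simp: tri_def)
    qed
  qed
  moreover have "card {e \<in> tri n. ?P e} = (if al n = a then 1 else 0) + (if be n = a then 1 else 0) + (if (al n + be n) mod int m = a then 1 else 0)"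
  proof -
    have r: "0 \<le> al n \<and> al n < int m \<and> 0 \<le> be n \<and> be n < int m" using Suc.prems by simp
    have "card {e \<in> tri n. ?P e} = (if ?P {0, 2*n+1} then 1 else 0) + (if ?P {0, 2*n+2} then 1 else 0) + (if ?P {2*n+1, 2*n+2} then 1 else 0)"
      unfolding tri_def by (rule card_filter3) (auto simp: doubleton_eq_iff)
    also have "?P {0, 2*n+1} \<longleftrightarrow> (lab al be 0 + lab al be (2*n+1)) mod int m = a" by (rule edge_pred) simp
    also have "?P {0, 2*n+2} \<longleftrightarrow> (lab al be 0 + lab al be (2*n+2)) mod int m = a" by (rule edge_pred) simp
    also have "?P {2*n+1, 2*n+2} \<longleftrightarrow> (lab al be (2*n+1) + lab al be (2*n+2)) mod int m = a" by (rule edge_pred) simp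
    finally show ?thesis using r by simp
  qed
  ultimately show ?case using Suc by (simp add: edge_count_def)
qed

definition AP :: "int \<Rightarrow> int \<Rightarrow> nat \<Rightarrow> nat \<Rightarrow> int \<Rightarrow> nat" where
  "AP b d lo hi a = (if d dvd (a - b) \<and> int lo \<le> (a - b) div d \<and> (a - b) div d < int hi then 1 else 0)"

lemma ap_count:
  fixes lo hi :: nat and b d a :: int
  assumes "d \<noteq> 0"
  shows "(\<Sum>t\<in>{lo..<hi}. (if b + d * int t = a then 1 else 0::nat)) = AP b d lo hi a"
proof -
  have "card {t\<in>{lo..<hi}. b + d * int t = a} = (\<Sum>t\<in>{t\<in>{lo..<hi}. b + d * int t = a}. 1::nat)" by simp
  also have "\<dots> = (\<Sum>t\<in>{lo..<hi}. (if b + d * int t = a then 1 else 0::nat))"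
    by (rule sum.inter_filter) simp
  finally have "(\<Sum>t\<in>{lo..<hi}. (if b + d * int t = a then 1 else 0::nat)) = card {t\<in>{lo..<hi}. b + d * int t = a}" by simp
  also have "{t\<in>{lo..<hi}. b + d * int t = a} =
     (if d dvd (a - b) \<and> int lo \<le> (a - b) div d \<and> (a - b) div d < int hi then {nat ((a - b) div d)} else {})"
  proof (cases "d dvd (a - b) \<and> int lo \<le> (a - b) div d \<and> (a - b) div d < int hi")
    case True
    then obtain c where c: "a - b = d * c" by (auto elim: dvdE)
    have cd: "(a - b) div d = c" using c assms by simp
    have iff: "b + d * int t = a \<longleftrightarrow> int t = c" for t
    proof -
      have "b + d * int t = a \<longleftrightarrow> d * int t = d * c" using c by linarith
      also have "\<dots> \<longleftrightarrow> int t = c" using assms by simp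
      finally show ?thesis .
    qed
    have "{t\<in>{lo..<hi}. b + d * int t = a} = {nat c}" using True cd by (auto simp: iff)
    then show ?thesis unfolding if_P[OF True] using cd by simp
  next
    case False
    have "{t\<in>{lo..<hi}. b + d * int t = a} = {}"
    proof (rule ccontr)
      assume "\<not> ?thesis"
      then obtain t where t: "lo \<le> t" "t < hi" "b + d * int t = a" by auto
      then have "a - b = d * int t" by simp
      then have "d dvd (a - b)" "(a - b) div d = int t" using assms by auto
      with t False show False by auto
    qed
    then show ?thesis unfolding if_not_P[OF False] .
  qed
  finally show ?thesis by (simp add: AP_def)
qed

lemma mod_ind:
  fixes v a M :: int
  assumes "0 \<le> v" "v < 2*M" "0 \<le> a" "a < M"
  shows "(if v mod M = a then 1 else 0::nat) = (if v = a then 1 else 0) + (if v = a + M then 1 else 0)"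
proof (cases "v < M")
  case True
  then have "v mod M = v" using assms by simp
  then show ?thesis using True assms by auto
next
  case False
  have "(v - M + M) mod M = (v - M) mod M" by (rule mod_add_self2)
  moreover have "(v - M) mod M = v - M" using assms False by (intro mod_pos_pos_trivial) auto
  ultimately have "v mod M = v - M" by simp
  then show ?thesis using False assms by auto
qed

lemma family:
  fixes lo hi :: nat and b1 d1 b2 d2 M a :: int and al be :: "nat \<Rightarrow> int"
  assumes d: "d1 \<noteq> 0" "d2 \<noteq> 0" "d1 + d2 \<noteq> 0"
    and eqs: "\<And>t. lo \<le> t \<Longrightarrow> t < hi \<Longrightarrow> al t = b1 + d1 * int t \<and> be t = b2 + d2 * int t"
    and rng: "\<And>t. lo \<le> t \<Longrightarrow> t < hi \<Longrightarrow> 0 \<le> al t + be t \<and> al t + be t < 2 * M"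
    and a: "0 \<le> a" "a < M"
  shows "(\<Sum>t\<in>{lo..<hi}. (if al t = a then 1 else 0) + (if be t = a then 1 else 0)) =
           AP b1 d1 lo hi a + AP b2 d2 lo hi a"
    and "(\<Sum>t\<in>{lo..<hi}. (if al t = a then 1 else 0) + (if be t = a then 1 else 0) + (if (al t + be t) mod M = a then 1 else 0)) =
           AP b1 d1 lo hi a + AP b2 d2 lo hi a + AP (b1+b2) (d1+d2) lo hi a + AP (b1+b2) (d1+d2) lo hi (a + M)"
proof -
  have "(\<Sum>t\<in>{lo..<hi}. (if al t = a then 1 else 0) + (if be t = a then 1 else (0::nat))) =
        (\<Sum>t\<in>{lo..<hi}. (if b1 + d1 * int t = a then 1 else 0) + (if b2 + d2 * int t = a then 1 else 0))"
    by (rule sum.cong) (auto simp: eqs)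
  also have "\<dots> = AP b1 d1 lo hi a + AP b2 d2 lo hi a"
    by (simp add: sum.distrib ap_count d)
  finally show "(\<Sum>t\<in>{lo..<hi}. (if al t = a then 1 else 0) + (if be t = a then 1 else 0)) =
           AP b1 d1 lo hi a + AP b2 d2 lo hi a" .
  have "(\<Sum>t\<in>{lo..<hi}. (if al t = a then 1 else 0) + (if be t = a then 1 else 0) + (if (al t + be t) mod M = a then 1 else (0::nat))) =
        (\<Sum>t\<in>{lo..<hi}. (if b1 + d1 * int t = a then 1 else 0) + (if b2 + d2 * int t = a then 1 else 0)
            + (if (b1+b2) + (d1+d2) * int t = a then 1 else 0) + (if (b1+b2) + (d1+d2) * int t = a + M then 1 else 0))"
  proof (rule sum.cong)
    fix t assume "t \<in> {lo..<hi}"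
    then have t: "lo \<le> t" "t < hi" by auto
    have e: "al t + be t = (b1+b2) + (d1+d2) * int t" using eqs[OF t] by (simp add: algebra_simps)
    have al: "al t = b1 + d1 * int t" and be: "be t = b2 + d2 * int t" using eqs[OF t] by auto
    have mi: "(if (al t + be t) mod M = a then 1 else 0::nat) = (if (b1+b2) + (d1+d2) * int t = a then 1 else 0) + (if (b1+b2) + (d1+d2) * int t = a + M then 1 else 0)"
      unfolding e by (rule mod_ind) (use rng[OF t] a e in auto)
    show "(if al t = a then 1 else 0) + (if be t = a then 1 else 0) + (if (al t + be t) mod M = a then 1 else (0::nat)) =
          (if b1 + d1 * int t = a then 1 else 0) + (if b2 + d2 * int t = a then 1 else 0)
            + (if (b1+b2) + (d1+d2) * int t = a then 1 else 0) + (if (b1+b2) + (d1+d2) * int t = a + M then 1 else 0)"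
      by (subst mi) (simp only: al be add.assoc)
  qed simp
  also have "\<dots> = AP b1 d1 lo hi a + AP b2 d2 lo hi a + AP (b1+b2) (d1+d2) lo hi a + AP (b1+b2) (d1+d2) lo hi (a + M)"
    by (simp add: sum.distrib ap_count d)
  finally show "(\<Sum>t\<in>{lo..<hi}. (if al t = a then 1 else 0) + (if be t = a then 1 else 0) + (if (al t + be t) mod M = a then 1 else 0)) =
           AP b1 d1 lo hi a + AP b2 d2 lo hi a + AP (b1+b2) (d1+d2) lo hi a + AP (b1+b2) (d1+d2) lo hi (a + M)" .
qed

definition CC :: "int \<Rightarrow> int \<Rightarrow> int \<Rightarrow> nat \<Rightarrow> nat \<Rightarrow> int \<Rightarrow> int \<Rightarrow> nat" where
  "CC g be de lo hi c x = (if c = g \<and> de dvd (x - be) \<and> int lo \<le> (x - be) div de \<and> (x - be) div de < int hi then 1 else 0)"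

lemma ap_split:
  fixes be g de x c :: int
  assumes "0 \<le> c" "c < 3" "0 \<le> g" "g < 3" "de \<noteq> 0"
  shows "AP (3*be+g) (3*de) lo hi (3*x+c) = CC g be de lo hi c x"
proof -
  have e: "3*x+c - (3*be+g) = 3*(x-be) + (c-g)" by simp
  have dv: "3*de dvd (3*x+c - (3*be+g)) \<longleftrightarrow> c = g \<and> de dvd (x - be)"
  proof
    assume h: "3*de dvd (3*x+c - (3*be+g))"
    then have "3 dvd 3*(x-be) + (c-g)" unfolding e by (meson dvd_mult_left)
    then have "3 dvd (c - g)" by (simp add: dvd_add_right_iff)
    then have cg: "c = g" using assms by (auto elim!: dvdE) (smt (verit))
    have "3*de dvd 3*(x - be)" using h cg unfolding e by simp
    then have "de dvd (x - be)" by (metis dvd_mult_cancel_left zero_neq_numeral)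
    then show "c = g \<and> de dvd (x - be)" using cg by simp
  next
    assume H: "c = g \<and> de dvd (x - be)"
    then have "3*de dvd 3*(x - be)" by (intro mult_dvd_mono) auto
    then show "3*de dvd (3*x+c - (3*be+g))" unfolding e using H by simp
  qed
  show ?thesis
  proof (cases "c = g \<and> de dvd (x - be)")
    case True
    then have "3*x+c - (3*be+g) = 3*(x-be)" using e by simp
    then have "(3*x+c - (3*be+g)) div (3*de) = (x - be) div de" by (simp only:) (rule div_mult_mult1, simp)
    then show ?thesis using True dv by (simp add: AP_def CC_def)
  next
    case False
    show ?thesis unfolding AP_def CC_def dv using False by auto
  qed
qed

lemma family3:
  fixes lo hi :: nat and bA dA bB dB gA gB bS gS x c :: int and k :: nat and al be :: "nat \<Rightarrow> int"
  assumes d: "dA \<noteq> 0" "dB \<noteq> 0" "dA + dB \<noteq> 0"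
    and g: "0 \<le> gA" "gA < 3" "0 \<le> gB" "gB < 3" "0 \<le> gS" "gS < 3" "3*bS + gS = 3*(bA+bB) + gA + gB"
    and eqs: "\<And>t. lo \<le> t \<Longrightarrow> t < hi \<Longrightarrow> al t = 3*(bA + dA * int t) + gA \<and> be t = 3*(bB + dB * int t) + gB"
    and rng: "\<And>t. lo \<le> t \<Longrightarrow> t < hi \<Longrightarrow> 0 \<le> al t + be t \<and> al t + be t < 2 * (3 * int k)"
    and xc: "0 \<le> c" "c < 3" "0 \<le> x" "x < int k"
  shows "(\<Sum>t\<in>{lo..<hi}. (if al t = 3*x+c then 1 else 0) + (if be t = 3*x+c then 1 else 0)) =
           CC gA bA dA lo hi c x + CC gB bB dB lo hi c x"
    and "(\<Sum>t\<in>{lo..<hi}. (if al t = 3*x+c then 1 else 0) + (if be t = 3*x+c then 1 else 0) + (if (al t + be t) mod (3 * int k) = 3*x+c then 1 else 0)) =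
           CC gA bA dA lo hi c x + CC gB bB dB lo hi c x + CC gS bS (dA+dB) lo hi c x + CC gS bS (dA+dB) lo hi c (x + int k)"
proof -
  have eqs': "\<And>t. lo \<le> t \<Longrightarrow> t < hi \<Longrightarrow> al t = (3*bA+gA) + (3*dA) * int t \<and> be t = (3*bB+gB) + (3*dB) * int t"
    using eqs by (simp add: algebra_simps)
  have a: "0 \<le> 3*x+c" "3*x+c < 3 * int k" using xc by auto
  note F = family[of "3*dA" "3*dB" lo hi al "3*bA+gA" be "3*bB+gB" "3 * int k" "3*x+c", OF _ _ _ eqs' rng a]
  have s1: "(3*bA+gA) + (3*bB+gB) = 3*bS + gS" using g by simp
  have s2: "3*dA + 3*dB = 3*(dA+dB)" by simp
  have s3: "3*x+c + 3 * int k = 3*(x + int k) + c" by simp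
  show "(\<Sum>t\<in>{lo..<hi}. (if al t = 3*x+c then 1 else 0) + (if be t = 3*x+c then 1 else 0)) =
           CC gA bA dA lo hi c x + CC gB bB dB lo hi c x"
    using F(1) d by (simp add: ap_split g xc)
  show "(\<Sum>t\<in>{lo..<hi}. (if al t = 3*x+c then 1 else 0) + (if be t = 3*x+c then 1 else 0) + (if (al t + be t) mod (3 * int k) = 3*x+c then 1 else 0)) =
           CC gA bA dA lo hi c x + CC gB bB dB lo hi c x + CC gS bS (dA+dB) lo hi c x + CC gS bS (dA+dB) lo hi c (x + int k)"
  proof -
    have A1: "AP ((3*bA+gA)+(3*bB+gB)) (3*dA+3*dB) lo hi (3*x+c) = CC gS bS (dA+dB) lo hi c x"
      unfolding s1 s2 by (rule ap_split) (use g xc d in auto)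
    have A2: "AP ((3*bA+gA)+(3*bB+gB)) (3*dA+3*dB) lo hi (3*x+c + 3 * int k) = CC gS bS (dA+dB) lo hi c (x + int k)"
      unfolding s1 s2 s3 by (rule ap_split) (use g xc d in auto)
    show ?thesis using F(2) d by (simp only: A1 A2) (simp add: ap_split g xc)
  qed
qed

lemma CC_p1[simp]: "CC g be 1 lo hi c x = (if c = g \<and> int lo \<le> x - be \<and> x - be < int hi then 1 else 0)"
  by (simp add: CC_def)

lemma CC_m1[simp]: "CC g be (-1) lo hi c x = (if c = g \<and> int lo \<le> be - x \<and> be - x < int hi then 1 else 0)"
  by (simp add: CC_def)

lemma CC_p2[simp]: "CC g be 2 lo hi c x = (if c = g \<and> even (x - be) \<and> 2 * int lo \<le> x - be \<and> x - be < 2 * int hi then 1 else 0)"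
  unfolding CC_def by (auto elim!: evenE)

lemma CC_m2[simp]: "CC g be (-2) lo hi c x = (if c = g \<and> even (be - x) \<and> 2 * int lo \<le> be - x \<and> be - x < 2 * int hi then 1 else 0)"
proof -
  have "(x - be) div (-2) = (be - x) div 2" by (metis div_minus_minus minus_diff_eq)
  moreover have "(-2) dvd (x - be) \<longleftrightarrow> even (be - x)" by (metis minus_dvd_iff dvd_minus_iff minus_diff_eq)
  ultimately show ?thesis unfolding CC_def by (auto elim!: evenE)
qed

lemma par_cases:
  fixes x :: int
  obtains y where "x = 2*y" | y where "x = 2*y+1"
  by (metis evenE oddE)

definition Vc :: "(nat \<Rightarrow> int) \<Rightarrow> (nat \<Rightarrow> int) \<Rightarrow> nat \<Rightarrow> int \<Rightarrow> nat" where
  "Vc al be n a = (if a = 0 then 1 else 0) + (\<Sum>i<n. (if al i = a then 1 else 0) + (if be i = a then 1 else 0))"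
definition Ec :: "int \<Rightarrow> (nat \<Rightarrow> int) \<Rightarrow> (nat \<Rightarrow> int) \<Rightarrow> nat \<Rightarrow> int \<Rightarrow> nat" where
  "Ec M al be n a = (\<Sum>i<n. (if al i = a then 1 else 0) + (if be i = a then 1 else 0) + (if (al i + be i) mod M = a then 1 else 0))"

definition good :: "nat \<Rightarrow> (nat \<Rightarrow> int) \<Rightarrow> (nat \<Rightarrow> int) \<Rightarrow> nat \<Rightarrow> bool" where
  "good m al be n \<longleftrightarrow> (\<forall>i<n. 0 \<le> al i \<and> al i < int m \<and> 0 \<le> be i \<and> be i < int m) \<and>
     (\<exists>q. \<forall>a. 0 \<le> a \<and> a < int m \<longrightarrow> Vc al be n a = q \<or> Vc al be n a = Suc q) \<and>
     (\<exists>q. \<forall>a. 0 \<le> a \<and> a < int m \<longrightarrow> Ec (int m) al be n a = q \<or> Ec (int m) al be n a = Suc q)"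

lemma good_cordial:
  assumes "m \<ge> 1" "good m al be n"
  shows "is_cordial (integer_mod_group m) (friendship_vertices n) (friendship_edges n)"
proof -
  have rng: "\<And>i. i < n \<Longrightarrow> 0 \<le> al i \<and> al i < int m \<and> 0 \<le> be i \<and> be i < int m"
    using assms(2) by (auto simp: good_def)
  obtain qv where qv: "\<And>a. 0 \<le> a \<Longrightarrow> a < int m \<Longrightarrow> Vc al be n a = qv \<or> Vc al be n a = Suc qv"
    using assms(2) unfolding good_def by blast
  obtain qe where qe: "\<And>a. 0 \<le> a \<Longrightarrow> a < int m \<Longrightarrow> Ec (int m) al be n a = qe \<or> Ec (int m) al be n a = Suc qe"
    using assms(2) unfolding good_def by blast
  have car: "carrier (integer_mod_group m) = {0..<int m}" using assms(1) by (simp add: carrier_integer_mod_group)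
  have VC: "vertex_count (integer_mod_group m) (friendship_vertices n) (lab al be) a = Vc al be n a" for a
    by (simp add: vertex_count_formula Vc_def)
  have EC: "edge_count (integer_mod_group m) (friendship_edges n) (lab al be) a = Ec (int m) al be n a" for a
    by (simp add: edge_count_formula[OF rng] Ec_def)
  have "cordial_labeling (integer_mod_group m) (friendship_vertices n) (friendship_edges n) (lab al be)"
    unfolding cordial_labeling_def car
  proof (intro conjI ballI)
    fix v assume "v \<in> friendship_vertices n"
    then have v: "v \<le> 2*n" by (simp add: friendship_vertices_def)
    show "lab al be v \<in> {0..<int m}"
    proof (cases "v = 0")
      case True then show ?thesis using assms(1) by simp
    next
      case False
      show ?thesis
      proof (cases "odd v")
        case True
        then obtain i where i: "v = 2*i+1" by (auto elim: oddE)
        then have "i < n" using v by simp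
        then show ?thesis using rng[of i] i by simp
      next
        case ev: False
        then obtain j where j: "v = 2*j" by (auto elim: evenE)
        then obtain i where i: "v = 2*i+2" using False by (cases j) auto
        then have "i < n" using v by simp
        then show ?thesis using rng[of i] i by simp
      qed
    qed
  next
    fix a1 a2 assume a: "a1 \<in> {0..<int m}" "a2 \<in> {0..<int m}"
    show "\<bar>int (vertex_count (integer_mod_group m) (friendship_vertices n) (lab al be) a1) -
           int (vertex_count (integer_mod_group m) (friendship_vertices n) (lab al be) a2)\<bar> \<le> 1"
      unfolding VC using qv[of a1] qv[of a2] a by auto
    show "\<bar>int (edge_count (integer_mod_group m) (friendship_edges n) (lab al be) a1) -
           int (edge_count (integer_mod_group m) (friendship_edges n) (lab al be) a2)\<bar> \<le> 1"
      unfolding EC using qe[of a1] qe[of a2] a by auto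
  qed
  then show ?thesis unfolding is_cordial_def by blast
qed

lemma sum_periodic:
  fixes g :: "nat \<Rightarrow> nat"
  shows "(\<Sum>j<q*m. g (j mod m)) = q * (\<Sum>t<m. g t)"
proof (induction q)
  case 0 then show ?case by simp
next
  case (Suc q)
  have "(\<Sum>j\<in>{0..<q*m}. g (j mod m)) + (\<Sum>j\<in>{q*m..<q*m+m}. g (j mod m)) = (\<Sum>j\<in>{0..<q*m+m}. g (j mod m))"
    by (rule sum.atLeastLessThan_concat) auto
  then have "(\<Sum>j<Suc q*m. g (j mod m)) = (\<Sum>j\<in>{0..<q*m}. g (j mod m)) + (\<Sum>j\<in>{q*m..<q*m+m}. g (j mod m))"
    by (simp add: atLeast0LessThan add.commute)
  also have "(\<Sum>j\<in>{q*m..<q*m+m}. g (j mod m)) = (\<Sum>t\<in>{0..<m}. g ((t + q*m) mod m))"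
    using sum.shift_bounds_nat_ivl[of "\<lambda>j. g (j mod m)" 0 "q*m" m] by (simp add: add.commute)
  also have "\<dots> = (\<Sum>t<m. g t)"
    by (rule sum.cong) auto
  finally show ?case using Suc by (simp add: atLeast0LessThan)
qed

lemma count_id:
  assumes "0 \<le> a" "a < int m"
  shows "(\<Sum>t<m. (if int t = a then 1 else 0::nat)) = 1"
proof -
  have "(\<Sum>t<m. (if int t = a then 1 else 0::nat)) = (\<Sum>t\<in>{0..<m}. (if 0 + 1 * int t = a then 1 else 0::nat))"
    by (simp add: atLeast0LessThan)
  also have "\<dots> = AP 0 1 0 m a" by (rule ap_count) simp
  finally show ?thesis using assms by (simp add: AP_def)
qed

lemma count_dbl:
  assumes "0 \<le> a" "a < int m" "odd m"
  shows "(\<Sum>t<m. (if (int t + int t) mod int m = a then 1 else 0::nat)) = 1"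
proof -
  have "(\<Sum>t<m. (if (int t + int t) mod int m = a then 1 else 0::nat)) =
        (\<Sum>t\<in>{0..<m}. (if 0 + 2 * int t = a then 1 else 0::nat) + (if 0 + 2 * int t = a + int m then 1 else 0))"
  proof (rule sum.cong)
    fix t assume "t \<in> {0..<m}"
    then have "0 \<le> int t + int t" "int t + int t < 2 * int m" by auto
    from mod_ind[OF this assms(1,2)] show "(if (int t + int t) mod int m = a then 1 else 0::nat) =
       (if 0 + 2 * int t = a then 1 else 0::nat) + (if 0 + 2 * int t = a + int m then 1 else 0)" by simp
  qed (simp add: atLeast0LessThan)
  also have "\<dots> = (\<Sum>t\<in>{0..<m}. (if 0 + 2 * int t = a then 1 else 0::nat)) + (\<Sum>t\<in>{0..<m}. (if 0 + 2 * int t = a + int m then 1 else 0::nat))"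
    by (rule sum.distrib)
  also have "\<dots> = AP 0 2 0 m a + AP 0 2 0 m (a + int m)"
  proof -
    have "(\<Sum>t\<in>{0..<m}. (if 0 + 2 * int t = a then 1 else 0::nat)) = AP 0 2 0 m a" by (rule ap_count) simp
    moreover have "(\<Sum>t\<in>{0..<m}. (if 0 + 2 * int t = a + int m then 1 else 0::nat)) = AP 0 2 0 m (a + int m)" by (rule ap_count) simp
    ultimately show ?thesis by simp
  qed
  also have "\<dots> = 1"
  proof -
    have om: "odd (int m)" using assms(3) by simp
    show ?thesis
    proof (cases "even a")
      case True
      then have "\<not> even (a + int m)" using om by simp
      have "0 \<le> a div 2 \<and> a div 2 < int m" using assms(1,2) by presburger
      then have "AP 0 2 0 m a = 1" using True unfolding AP_def by simp
      moreover have "AP 0 2 0 m (a + int m) = 0" using \<open>\<not> even (a + int m)\<close> unfolding AP_def by (simp del: even_add)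
      ultimately show ?thesis by simp
    next
      case False
      then have "even (a + int m)" using om by simp
      have "0 \<le> (a + int m) div 2 \<and> (a + int m) div 2 < int m" using assms(1,2) by presburger
      then have "AP 0 2 0 m (a + int m) = 1" using \<open>even (a + int m)\<close> unfolding AP_def by (simp del: even_add)
      moreover have "AP 0 2 0 m a = 0" using False unfolding AP_def by simp
      ultimately show ?thesis by simp
    qed
  qed
  finally show ?thesis .
qed

definition extl :: "nat \<Rightarrow> nat \<Rightarrow> (nat \<Rightarrow> int) \<Rightarrow> nat \<Rightarrow> int" where
  "extl m r al i = (if i < r then al i else int ((i - r) mod m))"

lemma split_ext:
  fixes F :: "nat \<Rightarrow> nat"
  shows "(\<Sum>i<r + q*m. F i) = (\<Sum>i<r. F i) + (\<Sum>j<q*m. F (r + j))"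
proof -
  have "(\<Sum>i\<in>{0..<r}. F i) + (\<Sum>i\<in>{r..<r+q*m}. F i) = (\<Sum>i\<in>{0..<r+q*m}. F i)"
    by (rule sum.atLeastLessThan_concat) auto
  then have "(\<Sum>i<r + q*m. F i) = (\<Sum>i\<in>{0..<r}. F i) + (\<Sum>i\<in>{r..<r+q*m}. F i)"
    by (simp add: atLeast0LessThan)
  also have "(\<Sum>i\<in>{r..<r+q*m}. F i) = (\<Sum>j\<in>{0..<q*m}. F (j + r))"
    using sum.shift_bounds_nat_ivl[of F 0 r "q*m"] by (simp add: add.commute)
  finally show ?thesis by (simp add: atLeast0LessThan add.commute)
qed

lemma good_ext:
  assumes "m \<ge> 1" "odd m" "good m al be r"
  shows "good m (extl m r al) (extl m r be) (r + q*m)"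
proof -
  let ?A = "extl m r al" and ?B = "extl m r be"
  have rng: "\<And>i. i < r \<Longrightarrow> 0 \<le> al i \<and> al i < int m \<and> 0 \<le> be i \<and> be i < int m"
    using assms(3) by (auto simp: good_def)
  obtain qv where qv: "\<And>a. 0 \<le> a \<Longrightarrow> a < int m \<Longrightarrow> Vc al be r a = qv \<or> Vc al be r a = Suc qv"
    using assms(3) unfolding good_def by blast
  obtain qe where qe: "\<And>a. 0 \<le> a \<Longrightarrow> a < int m \<Longrightarrow> Ec (int m) al be r a = qe \<or> Ec (int m) al be r a = Suc qe"
    using assms(3) unfolding good_def by blast
  have V: "Vc ?A ?B (r + q*m) a = Vc al be r a + 2*q" if a: "0 \<le> a" "a < int m" for a
  proof -
    have "(\<Sum>i<r + q*m. (if ?A i = a then 1 else 0) + (if ?B i = a then 1 else (0::nat))) =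
          (\<Sum>i<r. (if ?A i = a then 1 else 0) + (if ?B i = a then 1 else 0)) +
          (\<Sum>j<q*m. (if ?A (r+j) = a then 1 else 0) + (if ?B (r+j) = a then 1 else 0))"
      by (rule split_ext)
    also have "(\<Sum>i<r. (if ?A i = a then 1 else 0) + (if ?B i = a then 1 else (0::nat))) =
               (\<Sum>i<r. (if al i = a then 1 else 0) + (if be i = a then 1 else 0))"
      by (rule sum.cong) (auto simp: extl_def)
    also have "(\<Sum>j<q*m. (if ?A (r+j) = a then 1 else 0) + (if ?B (r+j) = a then 1 else (0::nat))) =
               (\<Sum>j<q*m. (\<lambda>t. 2 * (if int t = a then 1 else 0)) (j mod m))"
      by (rule sum.cong) (auto simp: extl_def)
    also have "\<dots> = q * (\<Sum>t<m. 2 * (if int t = a then 1 else (0::nat)))" by (rule sum_periodic)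
    also have "\<dots> = 2 * q" using count_id[OF a] by (simp add: sum_distrib_left[symmetric])
    finally show ?thesis by (simp add: Vc_def)
  qed
  have E: "Ec (int m) ?A ?B (r + q*m) a = Ec (int m) al be r a + 3*q" if a: "0 \<le> a" "a < int m" for a
  proof -
    have "(\<Sum>i<r + q*m. (if ?A i = a then 1 else 0) + (if ?B i = a then 1 else 0) + (if (?A i + ?B i) mod int m = a then 1 else (0::nat))) =
          (\<Sum>i<r. (if ?A i = a then 1 else 0) + (if ?B i = a then 1 else 0) + (if (?A i + ?B i) mod int m = a then 1 else 0)) +
          (\<Sum>j<q*m. (if ?A (r+j) = a then 1 else 0) + (if ?B (r+j) = a then 1 else 0) + (if (?A (r+j) + ?B (r+j)) mod int m = a then 1 else 0))"
      by (rule split_ext)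
    also have "(\<Sum>i<r. (if ?A i = a then 1 else 0) + (if ?B i = a then 1 else 0) + (if (?A i + ?B i) mod int m = a then 1 else (0::nat))) =
               (\<Sum>i<r. (if al i = a then 1 else 0) + (if be i = a then 1 else 0) + (if (al i + be i) mod int m = a then 1 else 0))"
      by (rule sum.cong) (auto simp: extl_def)
    also have "(\<Sum>j<q*m. (if ?A (r+j) = a then 1 else 0) + (if ?B (r+j) = a then 1 else 0) + (if (?A (r+j) + ?B (r+j)) mod int m = a then 1 else (0::nat))) =
               (\<Sum>j<q*m. (\<lambda>t. 2 * (if int t = a then 1 else 0) + (if (int t + int t) mod int m = a then 1 else 0)) (j mod m))"
      by (rule sum.cong) (auto simp: extl_def)
    also have "\<dots> = q * (\<Sum>t<m. 2 * (if int t = a then 1 else 0) + (if (int t + int t) mod int m = a then 1 else (0::nat)))"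
      by (rule sum_periodic)
    also have "\<dots> = 3 * q" using count_id[OF a] count_dbl[OF a assms(2)]
      by (simp add: sum.distrib sum_distrib_left[symmetric])
    finally show ?thesis by (simp add: Ec_def)
  qed
  have R: "\<forall>i<r + q*m. 0 \<le> ?A i \<and> ?A i < int m \<and> 0 \<le> ?B i \<and> ?B i < int m"
  proof (intro allI impI)
    fix i assume "i < r + q*m"
    show "0 \<le> ?A i \<and> ?A i < int m \<and> 0 \<le> ?B i \<and> ?B i < int m"
      using rng[of i] assms(1) by (auto simp: extl_def)
  qed
  show ?thesis unfolding good_def
  proof (intro conjI)
    show "\<exists>q'. \<forall>a. 0 \<le> a \<and> a < int m \<longrightarrow> Vc ?A ?B (r + q*m) a = q' \<or> Vc ?A ?B (r + q*m) a = Suc q'"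
      by (rule exI[of _ "qv + 2*q"]) (use V qv in auto)
    show "\<exists>q'. \<forall>a. 0 \<le> a \<and> a < int m \<longrightarrow> Ec (int m) ?A ?B (r + q*m) a = q' \<or> Ec (int m) ?A ?B (r + q*m) a = Suc q'"
      by (rule exI[of _ "qe + 3*q"]) (use E qe in auto)
  qed (rule R)
qed

lemma sum_split4:
  fixes F :: "nat \<Rightarrow> nat"
  assumes "a0 \<le> a1" "a1 \<le> a2" "a2 \<le> a3" "a3 \<le> a4"
  shows "(\<Sum>i\<in>{a0..<a4}. F i) = (\<Sum>i\<in>{a0..<a1}. F i) + (\<Sum>i\<in>{a1..<a2}. F i) + (\<Sum>i\<in>{a2..<a3}. F i) + (\<Sum>i\<in>{a3..<a4}. F i)"
  using assms by (simp add: sum.atLeastLessThan_concat)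

lemma decomp3:
  fixes a :: int and k :: nat
  assumes "0 \<le> a" "a < 3 * int k"
  obtains x c where "a = 3*x + c" "0 \<le> c" "c < 3" "0 \<le> x" "x < int k"
proof -
  have "a = 3 * (a div 3) + a mod 3" by simp
  moreover have "0 \<le> a mod 3" "a mod 3 < 3" by auto
  moreover have "0 \<le> a div 3" "a div 3 < int k" using assms by auto
  ultimately show ?thesis using that by blast
qed

definition al3 :: "nat \<Rightarrow> nat \<Rightarrow> nat \<Rightarrow> int" where
  "al3 k s t = (if t < 2 then 1 else if t < s+2 then 3*(int t - 1) + 1
     else if t < s+1+k then 3*(int t - int s - 1) else 3*(int t - int s - int k))"
definition be3 :: "nat \<Rightarrow> nat \<Rightarrow> nat \<Rightarrow> int" where
  "be3 k s t = (if t < 2 then 3*(int k - 1) + 2 else if t < s+2 then 3*(int t - 2) + 2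
     else if t < s+1+k then 3*(int t - int s - 1) + 1 else 3*(int t - int s - int k - 1) + 2)"

lemma base3:
  fixes k s :: nat
  assumes k: "odd k" and s: "s < k"
  shows "good (3*k) (al3 k s) (be3 k s) (2*k + s)"
proof -
  have k1: "k \<ge> 1" using k by (cases k) auto
  define h where "h = k div 2"
  have hk: "int k = 2 * int h + 1" using k unfolding h_def by presburger
  define K where "K = int k"
  define S where "S = int s"
  define H where "H = int h"
  have KS: "0 \<le> S" "S < K" "K = 2*H+1" "0 \<le> H" using s hk unfolding K_def S_def H_def by auto
  let ?al = "al3 k s" and ?be = "be3 k s"
  have R: "\<forall>t<2*k+s. 0 \<le> ?al t \<and> ?al t < int (3*k) \<and> 0 \<le> ?be t \<and> ?be t < int (3*k)"
    using s k1 by (auto simp: al3_def be3_def)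
  have rngA: "\<And>t. lo \<le> t \<Longrightarrow> t < hi \<Longrightarrow> hi \<le> 2*k+s \<Longrightarrow> 2 \<le> lo \<Longrightarrow> 0 \<le> ?al t + ?be t \<and> ?al t + ?be t < 2 * (3 * int k)" for lo hi
    using s k1 by (auto simp: al3_def be3_def)
  have split: "(\<Sum>i<2*k+s. F i) = (\<Sum>i\<in>{0..<2}. F i) + (\<Sum>i\<in>{2..<s+2}. F i) + (\<Sum>i\<in>{s+2..<s+1+k}. F i) + (\<Sum>i\<in>{s+1+k..<2*k+s}. F i)" for F :: "nat \<Rightarrow> nat"
    using sum_split4[of 0 2 "s+2" "s+1+k" "2*k+s" F] k1 s by (simp add: atLeast0LessThan)
  have V: "Vc ?al ?be (2*k+s) a = 1 \<or> Vc ?al ?be (2*k+s) a = 2" if a: "0 \<le> a" "a < int (3*k)" for a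
  proof -
    obtain x c where xc: "a = 3*x + c" "0 \<le> c" "c < 3" "0 \<le> x" "x < int k" using decomp3[of a k] a by auto
    let ?v = "\<lambda>t. (if ?al t = 3*x+c then 1 else 0) + (if ?be t = 3*x+c then 1 else (0::nat))"
    have F0: "(\<Sum>t\<in>{0..<2}. ?v t) = 2 * ((if 1 = 3*x+c then 1 else 0) + (if 3*(int k - 1) + 2 = 3*x+c then 1 else 0))"
      by (simp add: numeral_2_eq_2 al3_def be3_def)
    have FA: "(\<Sum>t\<in>{2..<s+2}. ?v t) = CC 1 (-1) 1 2 (s+2) c x + CC 2 (-2) 1 2 (s+2) c x"
      by (rule family3(1)[where gS=0 and bS="-2"]) (use rngA xc s in \<open>auto simp: al3_def be3_def\<close>)
    have FP: "(\<Sum>t\<in>{s+2..<s+1+k}. ?v t) = CC 0 (-int s - 1) 1 (s+2) (s+1+k) c x + CC 1 (-int s - 1) 1 (s+2) (s+1+k) c x"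
      by (rule family3(1)[where gS=1 and bS="-2*int s - 2"]) (use rngA xc s in \<open>auto simp: al3_def be3_def\<close>)
    have FQ: "(\<Sum>t\<in>{s+1+k..<2*k+s}. ?v t) = CC 0 (-int s - int k) 1 (s+1+k) (2*k+s) c x + CC 2 (-int s - int k - 1) 1 (s+1+k) (2*k+s) c x"
      by (rule family3(1)[where gS=2 and bS="-2*int s - 2*int k - 1"]) (use rngA xc s in \<open>auto simp: al3_def be3_def\<close>)
    have "Vc ?al ?be (2*k+s) a = (if 3*x+c = 0 then 1 else 0) + (\<Sum>t\<in>{0..<2}. ?v t) + (\<Sum>t\<in>{2..<s+2}. ?v t) + (\<Sum>t\<in>{s+2..<s+1+k}. ?v t) + (\<Sum>t\<in>{s+1+k..<2*k+s}. ?v t)"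
      unfolding Vc_def split xc(1) by simp
    also have "\<dots> = (if 3*x+c = 0 then 1 else 0) + 2 * ((if 1 = 3*x+c then 1 else 0) + (if 3*(int k - 1) + 2 = 3*x+c then 1 else 0))
       + (CC 1 (-1) 1 2 (s+2) c x + CC 2 (-2) 1 2 (s+2) c x)
       + (CC 0 (-int s - 1) 1 (s+2) (s+1+k) c x + CC 1 (-int s - 1) 1 (s+2) (s+1+k) c x)
       + (CC 0 (-int s - int k) 1 (s+1+k) (2*k+s) c x + CC 2 (-int s - int k - 1) 1 (s+1+k) (2*k+s) c x)"
      unfolding F0 FA FP FQ ..
    finally have e: "Vc ?al ?be (2*k+s) a = \<dots>" .
    have "c = 0 \<or> c = 1 \<or> c = 2" using xc by auto
    then show ?thesis
    proof (elim disjE)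
      assume "c = 0" then show ?thesis unfolding e using xc s k1 by simp
    next
      assume "c = 1" then show ?thesis unfolding e using xc s k1 by simp
    next
      assume "c = 2" then show ?thesis unfolding e using xc s k1 by simp
    qed
  qed
  have E: "Ec (int (3*k)) ?al ?be (2*k+s) a = 2 \<or> Ec (int (3*k)) ?al ?be (2*k+s) a = 3" if a: "0 \<le> a" "a < int (3*k)" for a
  proof -
    obtain x c where xc: "a = 3*x + c" "0 \<le> c" "c < 3" "0 \<le> x" "x < int k" using decomp3[of a k] a by auto
    let ?v = "\<lambda>t. (if ?al t = 3*x+c then 1 else 0) + (if ?be t = 3*x+c then 1 else 0) + (if (?al t + ?be t) mod (3 * int k) = 3*x+c then 1 else (0::nat))"
    have m0: "(3 * int k) mod (3 * int k) = 0" by simp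
    have F0: "(\<Sum>t\<in>{0..<2}. ?v t) = 2 * ((if 1 = 3*x+c then 1 else 0) + (if 3*(int k - 1) + 2 = 3*x+c then 1 else 0) + (if 0 = 3*x+c then 1 else 0))"
      by (simp add: numeral_2_eq_2 al3_def be3_def)
    have FA: "(\<Sum>t\<in>{2..<s+2}. ?v t) = CC 1 (-1) 1 2 (s+2) c x + CC 2 (-2) 1 2 (s+2) c x + CC 0 (-2) (1+1) 2 (s+2) c x + CC 0 (-2) (1+1) 2 (s+2) c (x + int k)"
      by (rule family3(2)) (use rngA xc s in \<open>auto simp: al3_def be3_def\<close>)
    have FP: "(\<Sum>t\<in>{s+2..<s+1+k}. ?v t) = CC 0 (-int s - 1) 1 (s+2) (s+1+k) c x + CC 1 (-int s - 1) 1 (s+2) (s+1+k) c x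
        + CC 1 (-2*int s - 2) (1+1) (s+2) (s+1+k) c x + CC 1 (-2*int s - 2) (1+1) (s+2) (s+1+k) c (x + int k)"
      by (rule family3(2)) (use rngA xc s in \<open>auto simp: al3_def be3_def\<close>)
    have FQ: "(\<Sum>t\<in>{s+1+k..<2*k+s}. ?v t) = CC 0 (-int s - int k) 1 (s+1+k) (2*k+s) c x + CC 2 (-int s - int k - 1) 1 (s+1+k) (2*k+s) c x
        + CC 2 (-2*int s - 2*int k - 1) (1+1) (s+1+k) (2*k+s) c x + CC 2 (-2*int s - 2*int k - 1) (1+1) (s+1+k) (2*k+s) c (x + int k)"
      by (rule family3(2)) (use rngA xc s in \<open>auto simp: al3_def be3_def\<close>)
    have "Ec (int (3*k)) ?al ?be (2*k+s) a = (\<Sum>t\<in>{0..<2}. ?v t) + (\<Sum>t\<in>{2..<s+2}. ?v t) + (\<Sum>t\<in>{s+2..<s+1+k}. ?v t) + (\<Sum>t\<in>{s+1+k..<2*k+s}. ?v t)"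
      unfolding Ec_def split xc(1) by simp
    also have "\<dots> = 2 * ((if 1 = 3*x+c then 1 else 0) + (if 3*(int k - 1) + 2 = 3*x+c then 1 else 0) + (if 0 = 3*x+c then 1 else 0))
       + (CC 1 (-1) 1 2 (s+2) c x + CC 2 (-2) 1 2 (s+2) c x + CC 0 (-2) (1+1) 2 (s+2) c x + CC 0 (-2) (1+1) 2 (s+2) c (x + int k))
       + (CC 0 (-int s - 1) 1 (s+2) (s+1+k) c x + CC 1 (-int s - 1) 1 (s+2) (s+1+k) c x
        + CC 1 (-2*int s - 2) (1+1) (s+2) (s+1+k) c x + CC 1 (-2*int s - 2) (1+1) (s+2) (s+1+k) c (x + int k))
       + (CC 0 (-int s - int k) 1 (s+1+k) (2*k+s) c x + CC 2 (-int s - int k - 1) 1 (s+1+k) (2*k+s) c x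
        + CC 2 (-2*int s - 2*int k - 1) (1+1) (s+1+k) (2*k+s) c x + CC 2 (-2*int s - 2*int k - 1) (1+1) (s+1+k) (2*k+s) c (x + int k))"
      unfolding F0 FA FP FQ ..
    finally have e: "Ec (int (3*k)) ?al ?be (2*k+s) a = \<dots>" .
    have "c = 0 \<or> c = 1 \<or> c = 2" using xc by auto
    then show ?thesis
    proof (elim disjE)
      assume "c = 0" then show ?thesis unfolding e using xc(2-5) KS apply (cases x rule: par_cases) apply (simp_all flip: K_def S_def H_def) apply (arith+)? done
    next
      assume "c = 1" then show ?thesis unfolding e using xc(2-5) KS apply (cases x rule: par_cases) apply (simp_all flip: K_def S_def H_def) apply (arith+)? done
    next
      assume "c = 2" then show ?thesis unfolding e using xc(2-5) KS apply (cases x rule: par_cases) apply (simp_all flip: K_def S_def H_def) apply (arith+)? done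
    qed
  qed
  show ?thesis unfolding good_def
  proof (intro conjI)
    show "\<exists>q. \<forall>a. 0 \<le> a \<and> a < int (3*k) \<longrightarrow> Vc ?al ?be (2*k+s) a = q \<or> Vc ?al ?be (2*k+s) a = Suc q"
    proof (rule exI[of _ 1], intro allI impI)
      fix a assume "0 \<le> a \<and> a < int (3*k)"
      then show "Vc ?al ?be (2*k+s) a = 1 \<or> Vc ?al ?be (2*k+s) a = Suc 1" using V[of a] by (simp add: numeral_2_eq_2)
    qed
    show "\<exists>q. \<forall>a. 0 \<le> a \<and> a < int (3*k) \<longrightarrow> Ec (int (3*k)) ?al ?be (2*k+s) a = q \<or> Ec (int (3*k)) ?al ?be (2*k+s) a = Suc q"
    proof (rule exI[of _ 2], intro allI impI)
      fix a assume "0 \<le> a \<and> a < int (3*k)"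
      then show "Ec (int (3*k)) ?al ?be (2*k+s) a = 2 \<or> Ec (int (3*k)) ?al ?be (2*k+s) a = Suc 2" using E[of a] by (simp add: numeral_3_eq_3 numeral_2_eq_2)
    qed
  qed (rule R)
qed

definition al_t0 :: "nat \<Rightarrow> nat \<Rightarrow> nat \<Rightarrow> int" where
  "al_t0 h r t = (3*((0) + (1) * int t) + (1))"

definition be_t0 :: "nat \<Rightarrow> nat \<Rightarrow> nat \<Rightarrow> int" where
  "be_t0 h r t = (3*((0) + (1) * int t) + (2))"

lemma base0:
  fixes h r :: nat
  assumes "r \<le> 2*h+1"
  shows "good (3*(2*h+1)) (al_t0 h r) (be_t0 h r) (r)"
proof -
  let ?al = "al_t0 h r" and ?be = "be_t0 h r"
  define K where "K = int (2*h+1)"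
  define S where "S = int r"
  define H where "H = int h"
  have KS: "0 \<le> S" "0 \<le> H" "K = 2*H+1" "S \<le> 2*H+1" unfolding K_def S_def H_def using assms by auto
  note as = assms
  have R: "\<forall>t<r. 0 \<le> ?al t \<and> ?al t < int (3*(2*h+1)) \<and> 0 \<le> ?be t \<and> ?be t < int (3*(2*h+1))"
    using as by (auto simp: al_t0_def be_t0_def)
  have rngA: "\<And>t. t < r \<Longrightarrow> 0 \<le> ?al t + ?be t \<and> ?al t + ?be t < 2 * (3 * int (2*h+1))"
    using as by (auto simp: al_t0_def be_t0_def)
  have split: "(\<Sum>i<r. F i) = (\<Sum>i\<in>{0..<r}. F i)" for F :: "nat \<Rightarrow> nat"
    by (simp add: atLeast0LessThan)
  have V: "Vc ?al ?be (r) a = 0 \<or> Vc ?al ?be (r) a = 1" if a: "0 \<le> a" "a < int (3*(2*h+1))" for a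
  proof -
    obtain x c where xc: "a = 3*x + c" "0 \<le> c" "c < 3" "0 \<le> x" "x < int (2*h+1)" using decomp3[of a "2*h+1"] a by auto
    let ?v = "\<lambda>t. (if ?al t = 3*x+c then 1 else 0) + (if ?be t = 3*x+c then 1 else (0::nat))"
    have F0: "(\<Sum>t\<in>{0..<r}. ?v t) = CC (1) (0) (1) (0) (r) c x + CC (2) (0) (1) (0) (r) c x"
      by (rule family3(1)[where gS="0" and bS="1" and k="2*h+1"]) (use rngA xc as in \<open>auto simp: al_t0_def be_t0_def algebra_simps\<close>)
    have "Vc ?al ?be (r) a = (if 3*x+c = 0 then 1 else 0) + (\<Sum>t\<in>{0..<r}. ?v t)"
      unfolding Vc_def split xc(1) by (simp add: add.assoc)
    also have "\<dots> = (if 3*x+c = 0 then 1 else 0) + (CC (1) (0) (1) (0) (r) c x + CC (2) (0) (1) (0) (r) c x)"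
      unfolding F0 ..
    finally have e: "Vc ?al ?be (r) a = \<dots>" .
    have "c = 0 \<or> c = 1 \<or> c = 2" using xc by auto
    then show ?thesis
    proof (elim disjE)
      assume "c = 0" then show ?thesis unfolding e using xc(2-5) KS as
        apply (cases x rule: par_cases) apply (simp_all flip: K_def S_def H_def) apply (arith+)? done
    next
      assume "c = 1" then show ?thesis unfolding e using xc(2-5) KS as
        apply (cases x rule: par_cases) apply (simp_all flip: K_def S_def H_def) apply (arith+)? done
    next
      assume "c = 2" then show ?thesis unfolding e using xc(2-5) KS as
        apply (cases x rule: par_cases) apply (simp_all flip: K_def S_def H_def) apply (arith+)? done
    qed
  qed
  have E: "Ec (int (3*(2*h+1))) ?al ?be (r) a = 0 \<or> Ec (int (3*(2*h+1))) ?al ?be (r) a = 1" if a: "0 \<le> a" "a < int (3*(2*h+1))" for a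
  proof -
    obtain x c where xc: "a = 3*x + c" "0 \<le> c" "c < 3" "0 \<le> x" "x < int (2*h+1)" using decomp3[of a "2*h+1"] a by auto
    let ?v = "\<lambda>t. (if ?al t = 3*x+c then 1 else 0) + (if ?be t = 3*x+c then 1 else 0) + (if (?al t + ?be t) mod (3 * int (2*h+1)) = 3*x+c then 1 else (0::nat))"
    have F0: "(\<Sum>t\<in>{0..<r}. ?v t) = CC (1) (0) (1) (0) (r) c x + CC (2) (0) (1) (0) (r) c x + CC (0) (1) ((1) + (1)) (0) (r) c x + CC (0) (1) ((1) + (1)) (0) (r) c (x + int (2*h+1))"
      by (rule family3(2)[where k="2*h+1"]) (use rngA xc as in \<open>auto simp: al_t0_def be_t0_def algebra_simps\<close>)
    have "Ec (int (3*(2*h+1))) ?al ?be (r) a = (\<Sum>t\<in>{0..<r}. ?v t)"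
      unfolding Ec_def split xc(1) by (simp add: add.assoc)
    also have "\<dots> = (CC (1) (0) (1) (0) (r) c x + CC (2) (0) (1) (0) (r) c x + CC (0) (1) ((1) + (1)) (0) (r) c x + CC (0) (1) ((1) + (1)) (0) (r) c (x + int (2*h+1)))"
      unfolding F0 ..
    finally have e: "Ec (int (3*(2*h+1))) ?al ?be (r) a = \<dots>" .
    have "c = 0 \<or> c = 1 \<or> c = 2" using xc by auto
    then show ?thesis
    proof (elim disjE)
      assume "c = 0" then show ?thesis unfolding e using xc(2-5) KS as
        apply (cases x rule: par_cases) apply (simp_all flip: K_def S_def H_def) apply (arith+)? done
    next
      assume "c = 1" then show ?thesis unfolding e using xc(2-5) KS as
        apply (cases x rule: par_cases) apply (simp_all flip: K_def S_def H_def) apply (arith+)? done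
    next
      assume "c = 2" then show ?thesis unfolding e using xc(2-5) KS as
        apply (cases x rule: par_cases) apply (simp_all flip: K_def S_def H_def) apply (arith+)? done
    qed
  qed
  show ?thesis unfolding good_def
  proof (intro conjI)
    show "\<exists>q. \<forall>a. 0 \<le> a \<and> a < int (3*(2*h+1)) \<longrightarrow> Vc ?al ?be (r) a = q \<or> Vc ?al ?be (r) a = Suc q"
    proof (rule exI[of _ 0], intro allI impI)
      fix a assume "0 \<le> a \<and> a < int (3*(2*h+1))"
      then show "Vc ?al ?be (r) a = 0 \<or> Vc ?al ?be (r) a = Suc 0" using V[of a] by (simp add: numeral_2_eq_2)
    qed
    show "\<exists>q. \<forall>a. 0 \<le> a \<and> a < int (3*(2*h+1)) \<longrightarrow> Ec (int (3*(2*h+1))) ?al ?be (r) a = q \<or> Ec (int (3*(2*h+1))) ?al ?be (r) a = Suc q"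
    proof (rule exI[of _ 0], intro allI impI)
      fix a assume "0 \<le> a \<and> a < int (3*(2*h+1))"
      then show "Ec (int (3*(2*h+1))) ?al ?be (r) a = 0 \<or> Ec (int (3*(2*h+1))) ?al ?be (r) a = Suc 0" using E[of a] by (simp add: numeral_2_eq_2)
    qed
  qed (rule R)
qed

definition al_t1 :: "nat \<Rightarrow> nat \<Rightarrow> nat \<Rightarrow> int" where
  "al_t1 h s t = (if t < 2*h+1-s then 3*((int s) + (1) * int t) + (1) else if t < 2*h+1 then 3*((4*int h + 1) + (-2) * int t) + (0) else 3*((2*int s + 4*int h + 2) + (-2) * int t) + (0))"

definition be_t1 :: "nat \<Rightarrow> nat \<Rightarrow> nat \<Rightarrow> int" where
  "be_t1 h s t = (if t < 2*h+1-s then 3*((int s) + (1) * int t) + (2) else if t < 2*h+1 then 3*((int s - 2*int h - 1) + (1) * int t) + (1) else 3*((- 2*int h - 1) + (1) * int t) + (2))"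

lemma base1:
  fixes h s :: nat
  assumes "s \<le> h"
  shows "good (3*(2*h+1)) (al_t1 h s) (be_t1 h s) (2*h+1+s)"
proof -
  let ?al = "al_t1 h s" and ?be = "be_t1 h s"
  define K where "K = int (2*h+1)"
  define S where "S = int s"
  define H where "H = int h"
  have KS: "0 \<le> S" "0 \<le> H" "K = 2*H+1" "S \<le> H" unfolding K_def S_def H_def using assms by auto
  note as = assms
  have R: "\<forall>t<2*h+1+s. 0 \<le> ?al t \<and> ?al t < int (3*(2*h+1)) \<and> 0 \<le> ?be t \<and> ?be t < int (3*(2*h+1))"
    using as by (auto simp: al_t1_def be_t1_def)
  have rngA: "\<And>t. t < 2*h+1+s \<Longrightarrow> 0 \<le> ?al t + ?be t \<and> ?al t + ?be t < 2 * (3 * int (2*h+1))"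
    using as by (auto simp: al_t1_def be_t1_def)
  have split: "(\<Sum>i<2*h+1+s. F i) = (\<Sum>i\<in>{0..<2*h+1-s}. F i) + (\<Sum>i\<in>{2*h+1-s..<2*h+1}. F i) + (\<Sum>i\<in>{2*h+1..<2*h+1+s}. F i)" for F :: "nat \<Rightarrow> nat"
  proof -
    have c1: "(\<Sum>i\<in>{0..<2*h+1-s}. F i) + (\<Sum>i\<in>{2*h+1-s..<2*h+1}. F i) = (\<Sum>i\<in>{0..<2*h+1}. F i)" by (rule sum.atLeastLessThan_concat) (use as in auto)
    have c2: "(\<Sum>i\<in>{0..<2*h+1}. F i) + (\<Sum>i\<in>{2*h+1..<2*h+1+s}. F i) = (\<Sum>i\<in>{0..<2*h+1+s}. F i)" by (rule sum.atLeastLessThan_concat) (use as in auto)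
    have "(\<Sum>i\<in>{0..<2*h+1+s}. F i) = (\<Sum>i\<in>{0..<2*h+1-s}. F i) + (\<Sum>i\<in>{2*h+1-s..<2*h+1}. F i) + (\<Sum>i\<in>{2*h+1..<2*h+1+s}. F i)" by (simp only: c1 c2)
    then show ?thesis by (simp only: atLeast0LessThan[symmetric])
  qed
  have V: "Vc ?al ?be (2*h+1+s) a = 0 \<or> Vc ?al ?be (2*h+1+s) a = 1" if a: "0 \<le> a" "a < int (3*(2*h+1))" for a
  proof -
    obtain x c where xc: "a = 3*x + c" "0 \<le> c" "c < 3" "0 \<le> x" "x < int (2*h+1)" using decomp3[of a "2*h+1"] a by auto
    let ?v = "\<lambda>t. (if ?al t = 3*x+c then 1 else 0) + (if ?be t = 3*x+c then 1 else (0::nat))"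
    have F0: "(\<Sum>t\<in>{0..<2*h+1-s}. ?v t) = CC (1) (int s) (1) (0) (2*h+1-s) c x + CC (2) (int s) (1) (0) (2*h+1-s) c x"
      by (rule family3(1)[where gS="0" and bS="2*int s + 1" and k="2*h+1"]) (use rngA xc as in \<open>auto simp: al_t1_def be_t1_def algebra_simps\<close>)
    have F1: "(\<Sum>t\<in>{2*h+1-s..<2*h+1}. ?v t) = CC (0) (4*int h + 1) (-2) (2*h+1-s) (2*h+1) c x + CC (1) (int s - 2*int h - 1) (1) (2*h+1-s) (2*h+1) c x"
      by (rule family3(1)[where gS="1" and bS="2*int h + int s" and k="2*h+1"]) (use rngA xc as in \<open>auto simp: al_t1_def be_t1_def algebra_simps\<close>)
    have F2: "(\<Sum>t\<in>{2*h+1..<2*h+1+s}. ?v t) = CC (0) (2*int s + 4*int h + 2) (-2) (2*h+1) (2*h+1+s) c x + CC (2) (- 2*int h - 1) (1) (2*h+1) (2*h+1+s) c x"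
      by (rule family3(1)[where gS="2" and bS="2*int s + 2*int h + 1" and k="2*h+1"]) (use rngA xc as in \<open>auto simp: al_t1_def be_t1_def algebra_simps\<close>)
    have "Vc ?al ?be (2*h+1+s) a = (if 3*x+c = 0 then 1 else 0) + (\<Sum>t\<in>{0..<2*h+1-s}. ?v t) + (\<Sum>t\<in>{2*h+1-s..<2*h+1}. ?v t) + (\<Sum>t\<in>{2*h+1..<2*h+1+s}. ?v t)"
      unfolding Vc_def split xc(1) by (simp add: add.assoc)
    also have "\<dots> = (if 3*x+c = 0 then 1 else 0) + (CC (1) (int s) (1) (0) (2*h+1-s) c x + CC (2) (int s) (1) (0) (2*h+1-s) c x) + (CC (0) (4*int h + 1) (-2) (2*h+1-s) (2*h+1) c x + CC (1) (int s - 2*int h - 1) (1) (2*h+1-s) (2*h+1) c x) + (CC (0) (2*int s + 4*int h + 2) (-2) (2*h+1) (2*h+1+s) c x + CC (2) (- 2*int h - 1) (1) (2*h+1) (2*h+1+s) c x)"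
      unfolding F0 F1 F2 ..
    finally have e: "Vc ?al ?be (2*h+1+s) a = \<dots>" .
    have "c = 0 \<or> c = 1 \<or> c = 2" using xc by auto
    then show ?thesis
    proof (elim disjE)
      assume "c = 0" then show ?thesis unfolding e using xc(2-5) KS as
        apply (cases x rule: par_cases) apply (simp_all flip: K_def S_def H_def) apply (arith+)? done
    next
      assume "c = 1" then show ?thesis unfolding e using xc(2-5) KS as
        apply (cases x rule: par_cases) apply (simp_all flip: K_def S_def H_def) apply (arith+)? done
    next
      assume "c = 2" then show ?thesis unfolding e using xc(2-5) KS as
        apply (cases x rule: par_cases) apply (simp_all flip: K_def S_def H_def) apply (arith+)? done
    qed
  qed
  have E: "Ec (int (3*(2*h+1))) ?al ?be (2*h+1+s) a = 1 \<or> Ec (int (3*(2*h+1))) ?al ?be (2*h+1+s) a = 2" if a: "0 \<le> a" "a < int (3*(2*h+1))" for a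
  proof -
    obtain x c where xc: "a = 3*x + c" "0 \<le> c" "c < 3" "0 \<le> x" "x < int (2*h+1)" using decomp3[of a "2*h+1"] a by auto
    let ?v = "\<lambda>t. (if ?al t = 3*x+c then 1 else 0) + (if ?be t = 3*x+c then 1 else 0) + (if (?al t + ?be t) mod (3 * int (2*h+1)) = 3*x+c then 1 else (0::nat))"
    have F0: "(\<Sum>t\<in>{0..<2*h+1-s}. ?v t) = CC (1) (int s) (1) (0) (2*h+1-s) c x + CC (2) (int s) (1) (0) (2*h+1-s) c x + CC (0) (2*int s + 1) ((1) + (1)) (0) (2*h+1-s) c x + CC (0) (2*int s + 1) ((1) + (1)) (0) (2*h+1-s) c (x + int (2*h+1))"
      by (rule family3(2)[where k="2*h+1"]) (use rngA xc as in \<open>auto simp: al_t1_def be_t1_def algebra_simps\<close>)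
    have F1: "(\<Sum>t\<in>{2*h+1-s..<2*h+1}. ?v t) = CC (0) (4*int h + 1) (-2) (2*h+1-s) (2*h+1) c x + CC (1) (int s - 2*int h - 1) (1) (2*h+1-s) (2*h+1) c x + CC (1) (2*int h + int s) ((-2) + (1)) (2*h+1-s) (2*h+1) c x + CC (1) (2*int h + int s) ((-2) + (1)) (2*h+1-s) (2*h+1) c (x + int (2*h+1))"
      by (rule family3(2)[where k="2*h+1"]) (use rngA xc as in \<open>auto simp: al_t1_def be_t1_def algebra_simps\<close>)
    have F2: "(\<Sum>t\<in>{2*h+1..<2*h+1+s}. ?v t) = CC (0) (2*int s + 4*int h + 2) (-2) (2*h+1) (2*h+1+s) c x + CC (2) (- 2*int h - 1) (1) (2*h+1) (2*h+1+s) c x + CC (2) (2*int s + 2*int h + 1) ((-2) + (1)) (2*h+1) (2*h+1+s) c x + CC (2) (2*int s + 2*int h + 1) ((-2) + (1)) (2*h+1) (2*h+1+s) c (x + int (2*h+1))"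
      by (rule family3(2)[where k="2*h+1"]) (use rngA xc as in \<open>auto simp: al_t1_def be_t1_def algebra_simps\<close>)
    have "Ec (int (3*(2*h+1))) ?al ?be (2*h+1+s) a = (\<Sum>t\<in>{0..<2*h+1-s}. ?v t) + (\<Sum>t\<in>{2*h+1-s..<2*h+1}. ?v t) + (\<Sum>t\<in>{2*h+1..<2*h+1+s}. ?v t)"
      unfolding Ec_def split xc(1) by (simp add: add.assoc)
    also have "\<dots> = (CC (1) (int s) (1) (0) (2*h+1-s) c x + CC (2) (int s) (1) (0) (2*h+1-s) c x + CC (0) (2*int s + 1) ((1) + (1)) (0) (2*h+1-s) c x + CC (0) (2*int s + 1) ((1) + (1)) (0) (2*h+1-s) c (x + int (2*h+1))) + (CC (0) (4*int h + 1) (-2) (2*h+1-s) (2*h+1) c x + CC (1) (int s - 2*int h - 1) (1) (2*h+1-s) (2*h+1) c x + CC (1) (2*int h + int s) ((-2) + (1)) (2*h+1-s) (2*h+1) c x + CC (1) (2*int h + int s) ((-2) + (1)) (2*h+1-s) (2*h+1) c (x + int (2*h+1))) + (CC (0) (2*int s + 4*int h + 2) (-2) (2*h+1) (2*h+1+s) c x + CC (2) (- 2*int h - 1) (1) (2*h+1) (2*h+1+s) c x + CC (2) (2*int s + 2*int h + 1) ((-2) + (1)) (2*h+1) (2*h+1+s) c x + CC (2) (2*int s + 2*int h + 1) ((-2) + (1)) (2*h+1) (2*h+1+s) c (x + int (2*h+1)))"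
      unfolding F0 F1 F2 ..
    finally have e: "Ec (int (3*(2*h+1))) ?al ?be (2*h+1+s) a = \<dots>" .
    have "c = 0 \<or> c = 1 \<or> c = 2" using xc by auto
    then show ?thesis
    proof (elim disjE)
      assume "c = 0" then show ?thesis unfolding e using xc(2-5) KS as
        apply (cases x rule: par_cases) apply (simp_all flip: K_def S_def H_def) apply (arith+)? done
    next
      assume "c = 1" then show ?thesis unfolding e using xc(2-5) KS as
        apply (cases x rule: par_cases) apply (simp_all flip: K_def S_def H_def) apply (arith+)? done
    next
      assume "c = 2" then show ?thesis unfolding e using xc(2-5) KS as
        apply (cases x rule: par_cases) apply (simp_all flip: K_def S_def H_def) apply (arith+)? done
    qed
  qed
  show ?thesis unfolding good_def
  proof (intro conjI)
    show "\<exists>q. \<forall>a. 0 \<le> a \<and> a < int (3*(2*h+1)) \<longrightarrow> Vc ?al ?be (2*h+1+s) a = q \<or> Vc ?al ?be (2*h+1+s) a = Suc q"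
    proof (rule exI[of _ 0], intro allI impI)
      fix a assume "0 \<le> a \<and> a < int (3*(2*h+1))"
      then show "Vc ?al ?be (2*h+1+s) a = 0 \<or> Vc ?al ?be (2*h+1+s) a = Suc 0" using V[of a] by (simp add: numeral_2_eq_2)
    qed
    show "\<exists>q. \<forall>a. 0 \<le> a \<and> a < int (3*(2*h+1)) \<longrightarrow> Ec (int (3*(2*h+1))) ?al ?be (2*h+1+s) a = q \<or> Ec (int (3*(2*h+1))) ?al ?be (2*h+1+s) a = Suc q"
    proof (rule exI[of _ 1], intro allI impI)
      fix a assume "0 \<le> a \<and> a < int (3*(2*h+1))"
      then show "Ec (int (3*(2*h+1))) ?al ?be (2*h+1+s) a = 1 \<or> Ec (int (3*(2*h+1))) ?al ?be (2*h+1+s) a = Suc 1" using E[of a] by (simp add: numeral_2_eq_2)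
    qed
  qed (rule R)
qed

definition al_t2 :: "nat \<Rightarrow> nat \<Rightarrow> nat \<Rightarrow> int" where
  "al_t2 h s t = (if t < s-h then 3*((0) + (1) * int t) + (1) else if t < s+1 then 3*((2*int h - int s) + (1) * int t) + (1) else if t < s+1+h then 3*((2*int h + 2*int s + 2) + (-2) * int t) + (0) else 3*((4*int h + 2*int s + 1) + (-2) * int t) + (0))"

definition be_t2 :: "nat \<Rightarrow> nat \<Rightarrow> nat \<Rightarrow> int" where
  "be_t2 h s t = (if t < s-h then 3*((0) + (1) * int t) + (2) else if t < s+1 then 3*((2*int h - int s) + (1) * int t) + (2) else if t < s+1+h then 3*((- int s - 1) + (1) * int t) + (1) else 3*((- int s - 1 - int h) + (1) * int t) + (2))"

lemma base2:
  fixes h s :: nat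
  assumes "h < s" and "s \<le> 2*h"
  shows "good (3*(2*h+1)) (al_t2 h s) (be_t2 h s) (2*h+1+s)"
proof -
  let ?al = "al_t2 h s" and ?be = "be_t2 h s"
  define K where "K = int (2*h+1)"
  define S where "S = int s"
  define H where "H = int h"
  have KS: "0 \<le> S" "0 \<le> H" "K = 2*H+1" "H < S" "S \<le> 2*H" unfolding K_def S_def H_def using assms by auto
  note as = assms
  have R: "\<forall>t<2*h+1+s. 0 \<le> ?al t \<and> ?al t < int (3*(2*h+1)) \<and> 0 \<le> ?be t \<and> ?be t < int (3*(2*h+1))"
    using as by (auto simp: al_t2_def be_t2_def)
  have rngA: "\<And>t. t < 2*h+1+s \<Longrightarrow> 0 \<le> ?al t + ?be t \<and> ?al t + ?be t < 2 * (3 * int (2*h+1))"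
    using as by (auto simp: al_t2_def be_t2_def)
  have split: "(\<Sum>i<2*h+1+s. F i) = (\<Sum>i\<in>{0..<s-h}. F i) + (\<Sum>i\<in>{s-h..<s+1}. F i) + (\<Sum>i\<in>{s+1..<s+1+h}. F i) + (\<Sum>i\<in>{s+1+h..<2*h+1+s}. F i)" for F :: "nat \<Rightarrow> nat"
  proof -
    have c1: "(\<Sum>i\<in>{0..<s-h}. F i) + (\<Sum>i\<in>{s-h..<s+1}. F i) = (\<Sum>i\<in>{0..<s+1}. F i)" by (rule sum.atLeastLessThan_concat) (use as in auto)
    have c2: "(\<Sum>i\<in>{0..<s+1}. F i) + (\<Sum>i\<in>{s+1..<s+1+h}. F i) = (\<Sum>i\<in>{0..<s+1+h}. F i)" by (rule sum.atLeastLessThan_concat) (use as in auto)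
    have c3: "(\<Sum>i\<in>{0..<s+1+h}. F i) + (\<Sum>i\<in>{s+1+h..<2*h+1+s}. F i) = (\<Sum>i\<in>{0..<2*h+1+s}. F i)" by (rule sum.atLeastLessThan_concat) (use as in auto)
    have "(\<Sum>i\<in>{0..<2*h+1+s}. F i) = (\<Sum>i\<in>{0..<s-h}. F i) + (\<Sum>i\<in>{s-h..<s+1}. F i) + (\<Sum>i\<in>{s+1..<s+1+h}. F i) + (\<Sum>i\<in>{s+1+h..<2*h+1+s}. F i)" by (simp only: c1 c2 c3)
    then show ?thesis by (simp only: atLeast0LessThan[symmetric])
  qed
  have V: "Vc ?al ?be (2*h+1+s) a = 1 \<or> Vc ?al ?be (2*h+1+s) a = 2" if a: "0 \<le> a" "a < int (3*(2*h+1))" for a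
  proof -
    obtain x c where xc: "a = 3*x + c" "0 \<le> c" "c < 3" "0 \<le> x" "x < int (2*h+1)" using decomp3[of a "2*h+1"] a by auto
    let ?v = "\<lambda>t. (if ?al t = 3*x+c then 1 else 0) + (if ?be t = 3*x+c then 1 else (0::nat))"
    have F0: "(\<Sum>t\<in>{0..<s-h}. ?v t) = CC (1) (0) (1) (0) (s-h) c x + CC (2) (0) (1) (0) (s-h) c x"
      by (rule family3(1)[where gS="0" and bS="1" and k="2*h+1"]) (use rngA xc as in \<open>auto simp: al_t2_def be_t2_def algebra_simps\<close>)
    have F1: "(\<Sum>t\<in>{s-h..<s+1}. ?v t) = CC (1) (2*int h - int s) (1) (s-h) (s+1) c x + CC (2) (2*int h - int s) (1) (s-h) (s+1) c x"
      by (rule family3(1)[where gS="0" and bS="4*int h - 2*int s + 1" and k="2*h+1"]) (use rngA xc as in \<open>auto simp: al_t2_def be_t2_def algebra_simps\<close>)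
    have F2: "(\<Sum>t\<in>{s+1..<s+1+h}. ?v t) = CC (0) (2*int h + 2*int s + 2) (-2) (s+1) (s+1+h) c x + CC (1) (- int s - 1) (1) (s+1) (s+1+h) c x"
      by (rule family3(1)[where gS="1" and bS="2*int h + int s + 1" and k="2*h+1"]) (use rngA xc as in \<open>auto simp: al_t2_def be_t2_def algebra_simps\<close>)
    have F3: "(\<Sum>t\<in>{s+1+h..<2*h+1+s}. ?v t) = CC (0) (4*int h + 2*int s + 1) (-2) (s+1+h) (2*h+1+s) c x + CC (2) (- int s - 1 - int h) (1) (s+1+h) (2*h+1+s) c x"
      by (rule family3(1)[where gS="2" and bS="3*int h + int s" and k="2*h+1"]) (use rngA xc as in \<open>auto simp: al_t2_def be_t2_def algebra_simps\<close>)
    have "Vc ?al ?be (2*h+1+s) a = (if 3*x+c = 0 then 1 else 0) + (\<Sum>t\<in>{0..<s-h}. ?v t) + (\<Sum>t\<in>{s-h..<s+1}. ?v t) + (\<Sum>t\<in>{s+1..<s+1+h}. ?v t) + (\<Sum>t\<in>{s+1+h..<2*h+1+s}. ?v t)"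
      unfolding Vc_def split xc(1) by (simp add: add.assoc)
    also have "\<dots> = (if 3*x+c = 0 then 1 else 0) + (CC (1) (0) (1) (0) (s-h) c x + CC (2) (0) (1) (0) (s-h) c x) + (CC (1) (2*int h - int s) (1) (s-h) (s+1) c x + CC (2) (2*int h - int s) (1) (s-h) (s+1) c x) + (CC (0) (2*int h + 2*int s + 2) (-2) (s+1) (s+1+h) c x + CC (1) (- int s - 1) (1) (s+1) (s+1+h) c x) + (CC (0) (4*int h + 2*int s + 1) (-2) (s+1+h) (2*h+1+s) c x + CC (2) (- int s - 1 - int h) (1) (s+1+h) (2*h+1+s) c x)"
      unfolding F0 F1 F2 F3 ..
    finally have e: "Vc ?al ?be (2*h+1+s) a = \<dots>" .
    have "c = 0 \<or> c = 1 \<or> c = 2" using xc by auto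
    then show ?thesis
    proof (elim disjE)
      assume "c = 0" then show ?thesis unfolding e using xc(2-5) KS as
        apply (cases x rule: par_cases) apply (simp_all flip: K_def S_def H_def) apply (arith+)? done
    next
      assume "c = 1" then show ?thesis unfolding e using xc(2-5) KS as
        apply (cases x rule: par_cases) apply (simp_all flip: K_def S_def H_def) apply (arith+)? done
    next
      assume "c = 2" then show ?thesis unfolding e using xc(2-5) KS as
        apply (cases x rule: par_cases) apply (simp_all flip: K_def S_def H_def) apply (arith+)? done
    qed
  qed
  have E: "Ec (int (3*(2*h+1))) ?al ?be (2*h+1+s) a = 1 \<or> Ec (int (3*(2*h+1))) ?al ?be (2*h+1+s) a = 2" if a: "0 \<le> a" "a < int (3*(2*h+1))" for a
  proof -
    obtain x c where xc: "a = 3*x + c" "0 \<le> c" "c < 3" "0 \<le> x" "x < int (2*h+1)" using decomp3[of a "2*h+1"] a by auto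
    let ?v = "\<lambda>t. (if ?al t = 3*x+c then 1 else 0) + (if ?be t = 3*x+c then 1 else 0) + (if (?al t + ?be t) mod (3 * int (2*h+1)) = 3*x+c then 1 else (0::nat))"
    have F0: "(\<Sum>t\<in>{0..<s-h}. ?v t) = CC (1) (0) (1) (0) (s-h) c x + CC (2) (0) (1) (0) (s-h) c x + CC (0) (1) ((1) + (1)) (0) (s-h) c x + CC (0) (1) ((1) + (1)) (0) (s-h) c (x + int (2*h+1))"
      by (rule family3(2)[where k="2*h+1"]) (use rngA xc as in \<open>auto simp: al_t2_def be_t2_def algebra_simps\<close>)
    have F1: "(\<Sum>t\<in>{s-h..<s+1}. ?v t) = CC (1) (2*int h - int s) (1) (s-h) (s+1) c x + CC (2) (2*int h - int s) (1) (s-h) (s+1) c x + CC (0) (4*int h - 2*int s + 1) ((1) + (1)) (s-h) (s+1) c x + CC (0) (4*int h - 2*int s + 1) ((1) + (1)) (s-h) (s+1) c (x + int (2*h+1))"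
      by (rule family3(2)[where k="2*h+1"]) (use rngA xc as in \<open>auto simp: al_t2_def be_t2_def algebra_simps\<close>)
    have F2: "(\<Sum>t\<in>{s+1..<s+1+h}. ?v t) = CC (0) (2*int h + 2*int s + 2) (-2) (s+1) (s+1+h) c x + CC (1) (- int s - 1) (1) (s+1) (s+1+h) c x + CC (1) (2*int h + int s + 1) ((-2) + (1)) (s+1) (s+1+h) c x + CC (1) (2*int h + int s + 1) ((-2) + (1)) (s+1) (s+1+h) c (x + int (2*h+1))"
      by (rule family3(2)[where k="2*h+1"]) (use rngA xc as in \<open>auto simp: al_t2_def be_t2_def algebra_simps\<close>)
    have F3: "(\<Sum>t\<in>{s+1+h..<2*h+1+s}. ?v t) = CC (0) (4*int h + 2*int s + 1) (-2) (s+1+h) (2*h+1+s) c x + CC (2) (- int s - 1 - int h) (1) (s+1+h) (2*h+1+s) c x + CC (2) (3*int h + int s) ((-2) + (1)) (s+1+h) (2*h+1+s) c x + CC (2) (3*int h + int s) ((-2) + (1)) (s+1+h) (2*h+1+s) c (x + int (2*h+1))"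
      by (rule family3(2)[where k="2*h+1"]) (use rngA xc as in \<open>auto simp: al_t2_def be_t2_def algebra_simps\<close>)
    have "Ec (int (3*(2*h+1))) ?al ?be (2*h+1+s) a = (\<Sum>t\<in>{0..<s-h}. ?v t) + (\<Sum>t\<in>{s-h..<s+1}. ?v t) + (\<Sum>t\<in>{s+1..<s+1+h}. ?v t) + (\<Sum>t\<in>{s+1+h..<2*h+1+s}. ?v t)"
      unfolding Ec_def split xc(1) by (simp add: add.assoc)
    also have "\<dots> = (CC (1) (0) (1) (0) (s-h) c x + CC (2) (0) (1) (0) (s-h) c x + CC (0) (1) ((1) + (1)) (0) (s-h) c x + CC (0) (1) ((1) + (1)) (0) (s-h) c (x + int (2*h+1))) + (CC (1) (2*int h - int s) (1) (s-h) (s+1) c x + CC (2) (2*int h - int s) (1) (s-h) (s+1) c x + CC (0) (4*int h - 2*int s + 1) ((1) + (1)) (s-h) (s+1) c x + CC (0) (4*int h - 2*int s + 1) ((1) + (1)) (s-h) (s+1) c (x + int (2*h+1))) + (CC (0) (2*int h + 2*int s + 2) (-2) (s+1) (s+1+h) c x + CC (1) (- int s - 1) (1) (s+1) (s+1+h) c x + CC (1) (2*int h + int s + 1) ((-2) + (1)) (s+1) (s+1+h) c x + CC (1) (2*int h + int s + 1) ((-2) + (1)) (s+1) (s+1+h) c (x + int (2*h+1))) + (CC (0) (4*int h + 2*int s + 1) (-2) (s+1+h) (2*h+1+s) c x + CC (2) (- int s - 1 - int h) (1) (s+1+h) (2*h+1+s) c x + CC (2) (3*int h + int s) ((-2) +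 (1)) (s+1+h) (2*h+1+s) c x + CC (2) (3*int h + int s) ((-2) + (1)) (s+1+h) (2*h+1+s) c (x + int (2*h+1)))"
      unfolding F0 F1 F2 F3 ..
    finally have e: "Ec (int (3*(2*h+1))) ?al ?be (2*h+1+s) a = \<dots>" .
    have "c = 0 \<or> c = 1 \<or> c = 2" using xc by auto
    then show ?thesis
    proof (elim disjE)
      assume "c = 0" then show ?thesis unfolding e using xc(2-5) KS as
        apply (cases x rule: par_cases) apply (simp_all flip: K_def S_def H_def) apply (arith+)? done
    next
      assume "c = 1" then show ?thesis unfolding e using xc(2-5) KS as
        apply (cases x rule: par_cases) apply (simp_all flip: K_def S_def H_def) apply (arith+)? done
    next
      assume "c = 2" then show ?thesis unfolding e using xc(2-5) KS as
        apply (cases x rule: par_cases) apply (simp_all flip: K_def S_def H_def) apply (arith+)? done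
    qed
  qed
  show ?thesis unfolding good_def
  proof (intro conjI)
    show "\<exists>q. \<forall>a. 0 \<le> a \<and> a < int (3*(2*h+1)) \<longrightarrow> Vc ?al ?be (2*h+1+s) a = q \<or> Vc ?al ?be (2*h+1+s) a = Suc q"
    proof (rule exI[of _ 1], intro allI impI)
      fix a assume "0 \<le> a \<and> a < int (3*(2*h+1))"
      then show "Vc ?al ?be (2*h+1+s) a = 1 \<or> Vc ?al ?be (2*h+1+s) a = Suc 1" using V[of a] by (simp add: numeral_2_eq_2)
    qed
    show "\<exists>q. \<forall>a. 0 \<le> a \<and> a < int (3*(2*h+1)) \<longrightarrow> Ec (int (3*(2*h+1))) ?al ?be (2*h+1+s) a = q \<or> Ec (int (3*(2*h+1))) ?al ?be (2*h+1+s) a = Suc q"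
    proof (rule exI[of _ 1], intro allI impI)
      fix a assume "0 \<le> a \<and> a < int (3*(2*h+1))"
      then show "Ec (int (3*(2*h+1))) ?al ?be (2*h+1+s) a = 1 \<or> Ec (int (3*(2*h+1))) ?al ?be (2*h+1+s) a = Suc 1" using E[of a] by (simp add: numeral_2_eq_2)
    qed
  qed (rule R)
qed

lemma base_exists:
  fixes m r :: nat
  assumes "odd m" "3 dvd m" "r < m"
  shows "\<exists>al be. good m al be r"
proof -
  obtain k where mk: "m = 3*k" using assms(2) by (auto elim: dvdE)
  have ko: "odd k" using assms(1) mk by simp
  define h where "h = k div 2"
  have kh: "k = 2*h+1" using ko unfolding h_def by presburger
  consider (a) "r \<le> k" | (b) "k < r" "r \<le> k + h" | (c) "k + h < r" "r < 2*k" | (d) "2*k \<le> r"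
    by linarith
  then show ?thesis
  proof cases
    case a
    have "good (3*(2*h+1)) (al_t0 h r) (be_t0 h r) r" by (rule base0) (use a kh in simp)
    then show ?thesis using mk kh by auto
  next
    case b
    define s where "s = r - k"
    have "good (3*(2*h+1)) (al_t1 h s) (be_t1 h s) (2*h+1+s)" by (rule base1) (use b kh in \<open>simp add: s_def\<close>)
    moreover have "2*h+1+s = r" using b kh s_def by simp
    ultimately show ?thesis using mk kh by auto
  next
    case c
    define s where "s = r - k"
    have "good (3*(2*h+1)) (al_t2 h s) (be_t2 h s) (2*h+1+s)" by (rule base2) (use c kh in \<open>simp_all add: s_def\<close>)
    moreover have "2*h+1+s = r" using c kh s_def by simp
    ultimately show ?thesis using mk kh by auto
  next
    case d
    define s where "s = r - 2*k"
    have "good (3*k) (al3 k s) (be3 k s) (2*k+s)" by (rule base3) (use d ko assms(3) mk in \<open>simp_all add: s_def\<close>)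
    moreover have "2*k+s = r" using d s_def by simp
    ultimately show ?thesis using mk by auto
  qed
qed

theorem corollary12p3:
  fixes m n :: nat
  assumes "m \<ge> 1" and "odd m" and "3 dvd m"
  shows "is_cordial (integer_mod_group m) (friendship_vertices n) (friendship_edges n)"
proof -
  define r where "r = n mod m"
  define q where "q = n div m"
  have n: "n = r + q*m" unfolding r_def q_def by simp
  have "r < m" unfolding r_def using assms(1) by simp
  then obtain al be where g: "good m al be r" using base_exists assms(2,3) by blast
  have "good m (extl m r al) (extl m r be) (r + q*m)" by (rule good_ext) (use assms g in auto)
  then show ?thesis unfolding n by (rule good_cordial[OF assms(1)])
qed

end
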